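(* For every integer $n\ge0$, the Hankel determinants $D_0(n,s,q)=\det\big(F(2i+2j,s,q)\big)_{i,j=0}^n$ and $D_1(n,s,q)=\det\big(F(2i+2j+1,s,q)\big)_{i,j=0}^n$ satisfy $$D_0(n,s,q)=D_0(n,0,q)\prod_{j=0}^n\Big((s-q^{2j})(s-q^{2j+1})\Big(s-\frac{1}{q^{2j}}\Big)\Big(s-\frac{1}{q^{2j+1}}\Big)\Big)^{n-j},$$ $$D_1(n,s,q)=D_1(n,0,q)\,(1-s)^{n+1}\prod_{j=0}^n\Big((s-q^{2j+2})(s-q^{2j+1})\Big(s-\frac{1}{q^{2j+2}}\Big)\Big(s-\frac{1}{q^{2j+1}}\Big)\Big)^{n-j}.$$
   Context: $q,s$ are indeterminates. $(x;q)_n=\prod_{j=0}^{n-1}(1-q^jx)$. The Gaussian binomial coefficient is $\begin{bmatrix} n\\ j\end{bmatrix}_q=\frac{(q;q)_n}{(q;q)_j(q;q)_{n-j}}$ for $0\le j\le n$ and $0$ otherwise. $F(n,s,q)=\dfrac{\sum_{j=0}^n(-s)^j\begin{bmatrix} n\\ j\end{bmatrix}_{q}}{(q;q^2)_{\lfloor (n+1)/2\rfloor}}$. $D_0(n,0,q)$ and $D_1(n,0,q)$ denote the respective determinants at $s=0$. *)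

theory Defs
  imports Main "Jordan_Normal_Form.Determinant"
begin

definition qpoch :: "'a::comm_ring_1 \<Rightarrow> 'a \<Rightarrow> nat \<Rightarrow> 'a" where
  "qpoch x q n = (\<Prod>j<n. (1 - q ^ j * x))"

definition qbinom :: "'a::field \<Rightarrow> nat \<Rightarrow> nat \<Rightarrow> 'a" where
  "qbinom q n j = (if j \<le> n then qpoch q q n / (qpoch q q j * qpoch q q (n - j)) else 0)"

definition F :: "nat \<Rightarrow> 'a::field \<Rightarrow> 'a \<Rightarrow> 'a" where
  "F n s q = (\<Sum>j=0..n. (- s) ^ j * qbinom q n j) / qpoch q (q ^ 2) ((n + 1) div 2)"

definition D0 :: "nat \<Rightarrow> 'a::field \<Rightarrow> 'a \<Rightarrow> 'a" where
  "D0 n s q = det (mat (Suc n) (Suc n) (\<lambda>(i, j). F (2 * i + 2 * j) s q))"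

definition D1 :: "nat \<Rightarrow> 'a::field \<Rightarrow> 'a \<Rightarrow> 'a" where
  "D1 n s q = det (mat (Suc n) (Suc n) (\<lambda>(i, j). F (2 * i + 2 * j + 1) s q))"

end

theory Submission
  imports Defs "HOL-Computational_Algebra.Polynomial_Factorial"
begin


locale qctx =
  fixes q :: "'a::field_char_0"
  assumes q0: "q \<noteq> 0" and qk: "\<And>k::nat. k > 0 \<Longrightarrow> q ^ k \<noteq> 1"
begin

lemma qpow_inj: "q ^ a = q ^ b \<Longrightarrow> a = b"
proof (rule ccontr)
  assume h: "q ^ a = q ^ b" "a \<noteq> b"
  { fix a b :: nat assume h1: "q ^ a = q ^ b" "a < b"
    then have "q ^ b = q ^ a * q ^ (b - a)" by (metis le_add_diff_inverse less_imp_le power_add)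
    with h1 have "q ^ a * q ^ (b - a) = q ^ a * 1" by simp
    then have "q ^ (b - a) = 1" using q0 by simp
    with qk[of "b-a"] \<open>a<b\<close> have False by simp }
  from this[of a b] this[of b a] h show False by (metis linorder_neqE_nat)
qed

lemma qpoch_0[simp]: "qpoch x y 0 = 1" by (simp add: qpoch_def)

lemma qp_Suc: "qpoch q q (Suc n) = qpoch q q n * (1 - q ^ Suc n)"
  by (simp add: qpoch_def mult.commute)

lemma qk': "1 - q ^ Suc k \<noteq> 0" using qk[of "Suc k"] by (simp del: power_Suc)

lemma qp_nz: "qpoch q q n \<noteq> 0"
proof (induction n)
  case (Suc n) then show ?case unfolding qp_Suc using qk'[of n] by (simp only: mult_eq_0_iff, blast)
qed simp

lemma qq_Suc: "qpoch q (q^2) (Suc m) = qpoch q (q^2) m * (1 - q ^ (2*m+1))"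
  by (simp add: qpoch_def power_mult[symmetric] power_add mult.commute)

lemma qq_nz: "qpoch q (q^2) m \<noteq> 0"
proof (induction m)
  case (Suc m)
  have "1 - q ^ (2*m+1) \<noteq> 0" using qk'[of "2*m"] by simp
  then show ?case using Suc by (simp only: qq_Suc no_zero_divisors, simp)
qed simp

abbreviation qb where "qb n k \<equiv> qbinom q n k"

lemma qb_0[simp]: "qb n 0 = 1"
  using qp_nz by (simp add: qbinom_def qpoch_def)

lemma qb_n[simp]: "qb n n = 1"
  using qp_nz by (simp add: qbinom_def qpoch_def)

lemma qb_gt[simp]: "n < k \<Longrightarrow> qb n k = 0"
  by (simp add: qbinom_def)

lemma qb_sym: "k \<le> n \<Longrightarrow> qb n (n - k) = qb n k"
  by (simp add: qbinom_def mult.commute)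

lemma fld1: "(A::'a)\<noteq>0 \<Longrightarrow> C\<noteq>0 \<Longrightarrow> u\<noteq>0 \<Longrightarrow> w*(N/(A*C)) = u*(N*w/(A*u*C))"
  by (simp add: field_simps)

lemma fld2: "(A::'a)\<noteq>0 \<Longrightarrow> B\<noteq>0 \<Longrightarrow> u\<noteq>0 \<Longrightarrow> v\<noteq>0 \<Longrightarrow> w = u + t*v \<Longrightarrow>
   N*w/(A*u*(B*v)) = N/(A*(B*v)) + t*(N/(A*u*B))"
  by (simp add: field_simps)

lemma qb_Q1: "(1 - q ^ Suc n) * qb n k = (1 - q ^ Suc k) * qb (Suc n) (Suc k)"
proof (cases "k \<le> n")
  case True
  then have e: "Suc n - Suc k = n - k" by simp
  show ?thesis using True unfolding qbinom_def
    by (simp only: e qp_Suc if_True Suc_le_mono) (rule fld1[OF qp_nz qp_nz qk'])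
next
  case False then show ?thesis by simp
qed

lemma qb_Q2: "qb (Suc n) (Suc k) = qb n k + q ^ Suc k * qb n (Suc k)"
proof (cases "k < n")
  case True
  then obtain m where m: "n = k + Suc m" by (metis add_Suc_right less_imp_Suc_add)
  have d1: "Suc n - Suc k = Suc m" "n - k = Suc m" "n - Suc k = m" using m by auto
  have e: "q ^ Suc n = q ^ Suc k * q ^ Suc m" using m by (simp add: power_add[symmetric])
  have w: "1 - q ^ Suc n = (1 - q ^ Suc k) + q ^ Suc k * (1 - q ^ Suc m)"
    unfolding e by (simp add: algebra_simps)
  have l: "k \<le> n" "Suc k \<le> n" "Suc k \<le> Suc n" using True by auto
  show ?thesis unfolding qbinom_def
    by (simp only: l if_True d1 qp_Suc) (rule fld2[OF qp_nz qp_nz qk' qk' w])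
next
  case False
  then consider "k = n" | "n < k" by linarith
  then show ?thesis by cases auto
qed

definition H :: "nat \<Rightarrow> 'a \<Rightarrow> 'a" where
  "H n x = (\<Sum>j=0..n. x ^ j * qb n j)"

lemma F_H: "F n s q = H n (- s) / qpoch q (q^2) ((n+1) div 2)"
  by (simp add: F_def H_def mult.commute)

lemma H_0[simp]: "H 0 x = 1" by (simp add: H_def)

lemma H_L1: "H (Suc n) (q*x) = H (Suc n) x - x * (1 - q ^ Suc n) * H n x"
proof -
  have "H (Suc n) (q*x) - H (Suc n) x = (\<Sum>j=0..Suc n. x ^ j * ((q^j - 1) * qb (Suc n) j))"
    by (simp add: H_def sum_subtractf power_mult_distrib algebra_simps)
  also have "\<dots> = (\<Sum>j=0..n. x ^ Suc j * ((q^Suc j - 1) * qb (Suc n) (Suc j)))"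
    by (subst sum.atLeast0_atMost_Suc_shift) simp
  also have "\<dots> = (\<Sum>j=0..n. x ^ Suc j * (- (1 - q ^ Suc n) * qb n j))"
  proof (intro sum.cong refl)
    fix j
    have "(q ^ Suc j - 1) * qb (Suc n) (Suc j) = - ((1 - q ^ Suc j) * qb (Suc n) (Suc j))"
      by (simp add: algebra_simps)
    also have "\<dots> = - (1 - q ^ Suc n) * qb n j" unfolding qb_Q1[symmetric] by (simp add: algebra_simps)
    finally show "x ^ Suc j * ((q ^ Suc j - 1) * qb (Suc n) (Suc j)) = x ^ Suc j * (- (1 - q ^ Suc n) * qb n j)"
      by simp
  qed
  also have "\<dots> = - x * (1 - q ^ Suc n) * H n x"
    by (simp add: H_def sum_distrib_left algebra_simps)
  finally show ?thesis by (simp add: algebra_simps)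
qed

lemma H_shift: "H n y = 1 + (\<Sum>j=0..n. y ^ Suc j * qb n (Suc j))"
proof (cases n)
  case 0 then show ?thesis by (simp add: H_def)
next
  case (Suc m)
  have "H n y = 1 + (\<Sum>j=0..m. y ^ Suc j * qb n (Suc j))"
    unfolding H_def Suc sum.atLeast0_atMost_Suc_shift by simp
  also have "(\<Sum>j=0..m. y ^ Suc j * qb n (Suc j)) = (\<Sum>j=0..n. y ^ Suc j * qb n (Suc j))"
    using Suc by simp
  finally show ?thesis .
qed

lemma H_L2: "H (Suc n) x = x * H n x + H n (q*x)"
proof -
  have S1: "H (Suc n) x = 1 + (\<Sum>j=0..n. x ^ Suc j * qb (Suc n) (Suc j))"
    unfolding H_def sum.atLeast0_atMost_Suc_shift by simp
  have S2: "(\<Sum>j=0..n. x ^ Suc j * qb (Suc n) (Suc j)) = (\<Sum>j=0..n. x ^ Suc j * qb n j) + (\<Sum>j=0..n. (q*x) ^ Suc j * qb n (Suc j))"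
    unfolding qb_Q2 distrib_left sum.distrib by (simp add: power_mult_distrib mult_ac)
  have S3: "(\<Sum>j=0..n. x ^ Suc j * qb n j) = x * H n x"
    by (simp add: H_def sum_distrib_left mult_ac)
  show ?thesis using S1 S2 S3 H_shift[of n "q*x"] by simp
qed

lemma H_rec: "H (Suc (Suc n)) x = (1 + x) * H (Suc n) x - x * (1 - q ^ Suc n) * H n x"
  using H_L2[of "Suc n" x] H_L1[of n x] by (simp add: algebra_simps)

lemma H_sym: "x \<noteq> 0 \<Longrightarrow> H n (1/x) = (1/x)^n * H n x"
proof -
  assume x: "x \<noteq> 0"
  have "x ^ n * H n (1/x) = (\<Sum>j=0..n. x^(n-j) * qb n j)"
    unfolding H_def sum_distrib_left
    by (intro sum.cong refl) (use x in \<open>auto simp: power_diff field_simps\<close>)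
  also have "\<dots> = (\<Sum>j=0..n. x^j * qb n (n - j))"
    by (rule sum.reindex_bij_witness[where i="\<lambda>j. n - j" and j="\<lambda>j. n - j"]) auto
  also have "\<dots> = H n x" unfolding H_def by (intro sum.cong refl) (simp add: qb_sym)
  finally show ?thesis using x by (simp add: field_simps)
qed


lemma H_m1: "H (2*M) (-1) = qpoch q (q^2) M \<and> H (2*M+1) (-1) = 0"
proof (induction M)
  case 0 then show ?case by (simp add: H_def)
next
  case (Suc M)
  have a: "H (Suc (Suc n)) (-1) = (1 - q ^ Suc n) * H n (-1)" for n
    using H_rec[of n "-1"] by (simp add: algebra_simps)
  have b: "2 * Suc M = Suc (Suc (2*M))" "2 * Suc M + 1 = Suc (Suc (2*M+1))" by simp_all
  have c1: "H (2*Suc M) (-1) = (1 - q^Suc(2*M)) * H (2*M) (-1)" unfolding b(1) by (rule a)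
  have c2: "H (2*Suc M+1) (-1) = (1 - q^Suc(2*M+1)) * H (2*M+1) (-1)" unfolding b(2) by (rule a)
  show ?case unfolding c1 c2 using Suc by (simp add: qq_Suc)
qed

lemma F0[simp]: "F 0 s q = 1" by (simp add: F_H)

lemma F_one: "F (2*M) 1 q = 1 \<and> F (2*M+1) 1 q = 0"
proof -
  have a: "(2*M+1) div 2 = M" "(2*M+1+1) div 2 = Suc M" by simp_all
  show ?thesis using H_m1[of M] qq_nz[of M] unfolding F_H a by simp
qed

lemma fld3: "(Q::'a)\<noteq>0 \<Longrightarrow> u\<noteq>0 \<Longrightarrow> A = B + c*u*C \<Longrightarrow> A/(Q*u) = B/(Q*u) + c*(C/Q)"
  by (simp add: field_simps)

lemma F_E1: "F (2*M+2) (q^Suc e) q = F (2*M+2) (q^e) q + q^e * (1 - q^(2*M+2)) * F (2*M+1) (q^e) q"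
proof -
  have a: "(2*M+2+1) div 2 = Suc M" "(2*M+1+1) div 2 = Suc M" by simp_all
  have h: "H (Suc (2*M+1)) (q * (- (q^e))) = H (Suc (2*M+1)) (- (q^e)) - (- (q^e)) * (1 - q ^ Suc (2*M+1)) * H (2*M+1) (- (q^e))"
    by (rule H_L1)
  have b: "q * (- (q^e)) = - (q ^ Suc e)" "Suc (2*M+1) = 2*M+2" by simp_all
  have h2: "H (2*M+2) (- (q ^ Suc e)) = H (2*M+2) (- (q^e)) + q^e * (1 - q^(2*M+2)) * H (2*M+1) (- (q^e))"
    using h unfolding b by (simp add: algebra_simps)
  show ?thesis unfolding F_H a h2 by (simp add: add_divide_distrib)
qed

lemma F_E2: "F (2*M+1) (q^Suc e) q = F (2*M+1) (q^e) q + q^e * F (2*M) (q^e) q"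
proof -
  have a: "(2*M+1+1) div 2 = Suc M" "(2*M+1) div 2 = M" by simp_all
  have h: "H (Suc (2*M)) (q * (- (q^e))) = H (Suc (2*M)) (- (q^e)) - (- (q^e)) * (1 - q ^ Suc (2*M)) * H (2*M) (- (q^e))"
    by (rule H_L1)
  have b: "q * (- (q^e)) = - (q ^ Suc e)" "Suc (2*M) = 2*M+1" by simp_all
  have h2: "H (2*M+1) (- (q ^ Suc e)) = H (2*M+1) (- (q^e)) + q^e * (1 - q^(2*M+1)) * H (2*M) (- (q^e))"
    using h unfolding b by (simp add: algebra_simps)
  have nz: "1 - q ^ (2*M+1) \<noteq> 0" using qk'[of "2*M"] by simp
  show ?thesis unfolding F_H a qq_Suc
    by (rule fld3[OF qq_nz nz h2])
qed

lemma G_exists: "\<exists>G G'. (\<forall>M. F (2*M) (q^e) q = poly G ((q^2)^M)) \<and> degree G \<le> e div 2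
   \<and> (\<forall>M. F (2*M+1) (q^e) q = poly G' ((q^2)^M)) \<and> (e = 0 \<longrightarrow> G' = 0) \<and> degree G' \<le> (e - 1) div 2"
proof (induction e)
  case 0
  show ?case by (rule exI[of _ 1], rule exI[of _ 0]) (simp add: F_one[simplified])
next
  case (Suc e)
  then obtain G G' where G: "\<And>M. F (2*M) (q^e) q = poly G ((q^2)^M)" "degree G \<le> e div 2"
    and G': "\<And>M. F (2*M+1) (q^e) q = poly G' ((q^2)^M)" "e = 0 \<longrightarrow> G' = 0" "degree G' \<le> (e - 1) div 2"
    by blast
  define P where "P = pcompose G' [:0, 1/q^2:]"
  define Gn where "Gn = G + smult (q^e) ([:1,-1:] * P)"
  define Gn' where "Gn' = G' + smult (q^e) G"
  have P: "poly P ((q^2)^Suc M) = poly G' ((q^2)^M)" for M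
    unfolding P_def using q0 by (simp add: poly_pcompose)
  have "F (2*M) (q^Suc e) q = poly Gn ((q^2)^M)" for M
  proof (cases M)
    case 0 then show ?thesis using G(1)[of 0] by (simp add: Gn_def)
  next
    case (Suc M')
    have e1: "2*M = 2*M'+2" using Suc by simp
    have x1: "F (2*M) (q^Suc e) q = F (2*M'+2) (q^e) q + q^e*(1-q^(2*M'+2))*F (2*M'+1) (q^e) q"
      unfolding e1 by (rule F_E1)
    have x2: "F (2*M'+2) (q^e) q = poly G ((q^2)^M)" using G(1)[of M] e1 by simp
    have x3: "F (2*M'+1) (q^e) q = poly P ((q^2)^M)" using G'(1)[of M'] P[of M'] Suc by simp
    have x4: "q^(2*M'+2) = (q^2)^M" using e1 by (simp only: power_mult[symmetric])
    show ?thesis unfolding x1 x2 x3 x4 by (simp add: Gn_def algebra_simps)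
  qed
  moreover have "F (2*M+1) (q^Suc e) q = poly Gn' ((q^2)^M)" for M
    unfolding F_E2 G'(1) G(1) Gn'_def by simp
  moreover have "degree Gn \<le> Suc e div 2"
  proof (cases "e = 0")
    case True then show ?thesis using G G' by (simp add: Gn_def P_def)
  next
    case False
    have "degree P \<le> degree G'" unfolding P_def using degree_pcompose_le[of G' "[:0, 1/q^2:]"] by (simp split: if_splits)
    then have "degree ([:1,-1:] * P) \<le> Suc (degree G')"
      using degree_mult_le[of "[:1,-1:]" P] by simp
    moreover have "Suc ((e-1) div 2) = Suc e div 2" using False by presburger
    ultimately have "degree (smult (q^e) ([:1,-1:] * P)) \<le> Suc e div 2"
      using G'(3) degree_smult_le[of "q^e" "[:1,-1:] * P"] by linarith
    moreover have "degree G \<le> Suc e div 2" using G(2) div_le_mono[of e "Suc e" 2] by simp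
    ultimately show ?thesis unfolding Gn_def using degree_add_le by blast
  qed
  moreover have "degree Gn' \<le> (Suc e - 1) div 2"
  proof -
    have "(e-1) div 2 \<le> e div 2" by (simp add: div_le_mono)
    then show ?thesis unfolding Gn'_def using G(2) G'(3)
      by (intro degree_add_le) (simp, rule le_trans[OF degree_smult_le], simp)
  qed
  ultimately show ?case by blast
qed

lemma F_inv: assumes "x \<noteq> 0"
  shows "F (2*M) (1/x) q = ((1/x)^2)^M * F (2*M) x q"
    and "F (2*M+1) (1/x) q = - (1/x) * ((1/x)^2)^M * F (2*M+1) x q"
proof -
  have a: "- (1/x) = 1 / (- x)" by simp
  have b: "(-x) \<noteq> 0" using assms by simp
  show "F (2*M) (1/x) q = ((1/x)^2)^M * F (2*M) x q"
    unfolding F_H a H_sym[OF b] by (simp add: power_mult power_minus_even)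
  have c: "(1 / - x)^(2*M+1) = - (1/x) * ((1/x)^2)^M"
    by (simp add: power_add power_mult[symmetric] power_minus_even)
  show "F (2*M+1) (1/x) q = - (1/x) * ((1/x)^2)^M * F (2*M+1) x q"
    unfolding F_H a H_sym[OF b] c by simp
qed

end


lemma det_pow_dvd:
  fixes A :: "'a::comm_ring_1 mat"
  assumes A: "A \<in> carrier_mat N N"
    and dv: "\<And>i j. i < N \<Longrightarrow> j < N \<Longrightarrow> d ^ (a i + b j) dvd A $$ (i,j)"
  shows "d ^ (sum a {0..<N} + sum b {0..<N}) dvd det A"
  unfolding det_def'[OF A]
proof (rule dvd_sum)
  fix p assume "p \<in> {p. p permutes {0..<N}}"
  then have p: "p permutes {0..<N}" by simp
  have "(\<Prod>i = 0..<N. d ^ (a i + b (p i))) dvd (\<Prod>i = 0..<N. A $$ (i, p i))"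
    by (rule prod_dvd_prod) (use dv p permutes_in_image[OF p] in auto)
  moreover have "(\<Prod>i = 0..<N. d ^ (a i + b (p i))) = d ^ (sum a {0..<N} + sum b {0..<N})"
    unfolding power_sum[symmetric] sum.distrib sum.permute[OF p, of b] by (simp add: comp_def)
  ultimately show "d ^ (sum a {0..<N} + sum b {0..<N}) dvd of_int (sign p) * (\<Prod>i = 0..<N. A $$ (i, p i))"
    by (simp add: dvd_mult2)
qed

lemma degree_det_le:
  fixes A :: "'a::comm_ring_1 poly mat"
  assumes A: "A \<in> carrier_mat N N"
    and dg: "\<And>i j. i < N \<Longrightarrow> j < N \<Longrightarrow> degree (A $$ (i,j)) \<le> a i + b j"
  shows "degree (det A) \<le> sum a {0..<N} + sum b {0..<N}"
  unfolding det_def'[OF A]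
proof (rule degree_sum_le)
  fix p assume "p \<in> {p. p permutes {0..<N}}"
  then have p: "p permutes {0..<N}" by simp
  have "degree (\<Prod>i = 0..<N. A $$ (i, p i)) \<le> (\<Sum>i = 0..<N. degree (A $$ (i, p i)))"
    using degree_prod_sum_le[of "{0..<N}" "\<lambda>i. A $$ (i, p i)"] by (simp add: comp_def)
  also have "\<dots> \<le> (\<Sum>i = 0..<N. a i + b (p i))"
    by (rule sum_mono) (use dg p permutes_in_image[OF p] in auto)
  also have "\<dots> = sum a {0..<N} + sum b {0..<N}"
    unfolding sum.distrib sum.permute[OF p, of b] by (simp add: comp_def)
  finally have "degree (\<Prod>i = 0..<N. A $$ (i, p i)) \<le> sum a {0..<N} + sum b {0..<N}" .
  moreover have "degree (of_int (sign p) * (\<Prod>i = 0..<N. A $$ (i, p i)) :: 'a poly) \<le> degree (\<Prod>i = 0..<N. A $$ (i, p i))"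
    using degree_mult_le[of "of_int (sign p) :: 'a poly"] by (simp add: degree_of_int)
  ultimately show "degree (of_int (sign p) * (\<Prod>i = 0..<N. A $$ (i, p i)) :: 'a poly) \<le> sum a {0..<N} + sum b {0..<N}"
    by linarith
qed (simp add: finite_permutations)

lemma expsum_vanish:
  fixes G :: "'a::field poly" and u y :: 'a and d m :: nat
  defines "R \<equiv> (\<Prod>p=0..d. [:-(u*y^p),1:])"
  assumes dg: "degree G \<le> d"
  shows "(\<Sum>k\<le>degree R. coeff R k * (u^(m+k) * poly G (y^(m+k)))) = 0"
proof -
  have "(\<Sum>k\<le>degree R. coeff R k * (u^(m+k) * poly G (y^(m+k))))
      = (\<Sum>k\<le>degree R. \<Sum>p\<le>degree G. coeff G p * u^m * (y^m)^p * (coeff R k * (u*y^p)^k))"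
    unfolding poly_altdef sum_distrib_left
    by (intro sum.cong refl) (simp add: power_add power_mult_distrib mult_ac flip: power_mult)
  also have "\<dots> = (\<Sum>p\<le>degree G. coeff G p * u^m * (y^m)^p * poly R (u*y^p))"
    by (subst sum.swap) (simp add: poly_altdef sum_distrib_left)
  also have "\<dots> = 0"
  proof (intro sum.neutral ballI)
    fix p assume "p \<in> {..degree G}"
    then have "p \<in> {0..d}" using dg by auto
    then have "poly R (u*y^p) = 0" unfolding R_def poly_prod
      by (intro prod_zero) (auto intro: bexI[of _ p])
    then show "coeff G p * u^m * (y^m)^p * poly R (u*y^p) = 0" by simp
  qed
  finally show ?thesis .
qed


lemma hankel_root_dvd:
  fixes \<mu> :: "nat \<Rightarrow> 'a::field poly" and G :: "'a poly"
  assumes ev: "\<And>k. poly (\<mu> k) r = u^k * poly G (y^k)" and dg: "degree G \<le> d"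
  shows "[:-r,1:]^(n - d) dvd det (mat (Suc n) (Suc n) (\<lambda>(i,j). \<mu> (i+j)))"
proof (cases "d < n")
  case False then show ?thesis by simp
next
  case True
  define N where "N = Suc n"
  define R where "R = (\<Prod>p=0..d. [:-(u*y^p),1:])"
  have degR: "degree R = Suc d" unfolding R_def
    by (subst degree_prod_eq_sum_degree) auto
  have lcR: "coeff R (Suc d) = 1" using lead_coeff_prod[of "\<lambda>p. [:-(u*y^p),1:]" "{0..d}"]
    unfolding R_def[symmetric] degR by simp
  define c where "c = (\<lambda>j t. if t \<le> d then (if j = t then 1 else 0)
       else (if t \<le> j + Suc d then coeff R (j + Suc d - t) else 0))"
  define Q where "Q = mat N N (\<lambda>(j,t). [: c j t :])"
  define M where "M = mat N N (\<lambda>(i,j). \<mu> (i+j))"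
  have M: "M \<in> carrier_mat N N" and Q: "Q \<in> carrier_mat N N" unfolding M_def Q_def by auto
  have "upper_triangular Q"
  proof (rule upper_triangularI)
    fix j t assume jt: "t < j" "j < dim_row Q"
    then have "t < N" "j < N" unfolding Q_def by auto
    moreover have "c j t = 0"
    proof (cases "t \<le> d")
      case False
      then have "j + Suc d - t > degree R" using jt degR by auto
      then show ?thesis using False jt unfolding c_def by (simp add: coeff_eq_0)
    qed (use jt in \<open>simp add: c_def\<close>)
    ultimately show "Q $$ (j, t) = 0" unfolding Q_def by simp
  qed
  then have "det Q = prod_list (diag_mat Q)" using det_upper_triangular Q by blast
  also have "\<dots> = 1"
  proof -
    have "\<forall>x \<in> set (diag_mat Q). x = 1"
      unfolding diag_mat_def Q_def c_def using lcR by auto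
    moreover have "\<And>xs::'a poly list. \<forall>x\<in>set xs. x = 1 \<Longrightarrow> prod_list xs = 1"
      subgoal for xs by (induction xs) auto done
    ultimately show ?thesis by blast
  qed
  finally have dQ: "det Q = 1" .
  have dMQ: "det (M * Q) = det M" using det_mult[OF M Q] dQ by simp
  define b where "b = (\<lambda>t::nat. if d < t then 1 else (0::nat))"
  have "[:-r,1:] ^ (sum (\<lambda>_. 0) {0..<N} + sum b {0..<N}) dvd det (M * Q)"
  proof (rule det_pow_dvd[of _ N])
    show "M * Q \<in> carrier_mat N N" using M Q by auto
  next
    fix i t assume it: "i < N" "t < N"
    show "[:-r,1:] ^ (0 + b t) dvd (M * Q) $$ (i, t)"
    proof (cases "d < t")
      case False then show ?thesis unfolding b_def by simp
    next
      case dt: True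
      define c0 where "c0 = t - Suc d"
      have e: "(M * Q) $$ (i, t) = (\<Sum>j = 0..<N. \<mu> (i+j) * [: c j t :])"
        using it M Q unfolding M_def Q_def by (simp add: scalar_prod_def)
      have "poly ((M * Q) $$ (i, t)) r = (\<Sum>j = 0..<N. u^(i+j) * poly G (y^(i+j)) * c j t)"
        unfolding e poly_sum by (simp add: ev mult_ac)
      also have "\<dots> = (\<Sum>j \<in> {c0..c0 + Suc d}. u^(i+j) * poly G (y^(i+j)) * c j t)"
      proof (rule sum.mono_neutral_right)
        show "{c0..c0 + Suc d} \<subseteq> {0..<N}" using it dt unfolding c0_def by auto
        show "\<forall>j\<in>{0..<N} - {c0..c0 + Suc d}. u ^ (i + j) * poly G (y ^ (i + j)) * c j t = 0"
        proof
          fix j assume "j \<in> {0..<N} - {c0..c0 + Suc d}"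
          then have "j < c0 \<or> j > c0 + Suc d" by auto
          then have "c j t = 0"
          proof
            assume "j < c0" then show ?thesis using dt unfolding c_def c0_def by auto
          next
            assume "j > c0 + Suc d"
            then have "j + Suc d - t > degree R" using dt degR unfolding c0_def by auto
            then show ?thesis using dt unfolding c_def by (auto simp: coeff_eq_0)
          qed
          then show "u ^ (i + j) * poly G (y ^ (i + j)) * c j t = 0" by simp
        qed
      qed simp
      also have "\<dots> = (\<Sum>k = 0..Suc d. u^(i+(k+c0)) * poly G (y^(i+(k+c0))) * c (k+c0) t)"
        by (subst sum.shift_bounds_cl_nat_ivl[symmetric]) (simp add: add_ac)
      also have "\<dots> = (\<Sum>k\<le>degree R. coeff R k * (u^((i+c0)+k) * poly G (y^((i+c0)+k))))"
        unfolding degR atLeast0AtMost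
        by (intro sum.cong refl) (use dt in \<open>auto simp: c_def c0_def add_ac\<close>)
      also have "\<dots> = 0" unfolding R_def by (rule expsum_vanish[OF dg])
      finally show ?thesis using dt unfolding b_def by (simp add: poly_eq_0_iff_dvd)
    qed
  qed
  moreover have "sum b {0..<N} = n - d"
  proof -
    have "sum b {0..<N} = card ({0..<N} \<inter> {t. d < t})" unfolding b_def
      by (simp add: sum.If_cases)
    also have "{0..<N} \<inter> {t. d < t} = {Suc d..<N}" by auto
    finally show ?thesis unfolding N_def by simp
  qed
  ultimately have "[:-r,1:]^(n-d) dvd det M" using dMQ by simp
  then show ?thesis unfolding M_def N_def .
qed


lemma sum_bidiag:
  fixes f :: "nat \<Rightarrow> 'a::comm_ring_1"
  assumes "t < N"
  shows "(\<Sum>j = 0..<N. f j * (if j = t then 1 else if Suc j = t then -1 else 0))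
       = f t - (if 0 < t then f (t - 1) else 0)"
proof -
  have "(\<Sum>j = 0..<N. f j * (if j = t then 1 else if Suc j = t then -1 else 0))
     = (\<Sum>j = 0..<N. (if j = t then f j else 0) - (if 0 < t then (if j = t - 1 then f j else 0) else 0))"
    by (intro sum.cong refl) auto
  also have "\<dots> = f t - (if 0 < t then f (t - 1) else 0)"
    unfolding sum_subtractf using assms by (simp add: sum.delta)
  finally show ?thesis .
qed

lemma hankel_one_dvd:
  fixes \<mu> :: "nat \<Rightarrow> 'a::field poly"
  assumes rep: "\<And>k. \<exists>\<rho>. \<mu> k = 1 + of_nat k * [:-1,1:] + [:-1,1:]^2 * \<rho>"
  shows "[:-1,1:]^(2*n) dvd det (mat (Suc n) (Suc n) (\<lambda>(i,j). \<mu> (i+j)))"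
proof -
  define X :: "'a poly" where "X = [:-1,1:]"
  have d1: "X dvd \<mu> (Suc k) - \<mu> k" for k
  proof -
    obtain r1 r2 where "\<mu> (Suc k) = 1 + of_nat (Suc k) * X + X^2 * r1" "\<mu> k = 1 + of_nat k * X + X^2 * r2"
      using rep unfolding X_def by blast
    then have "\<mu> (Suc k) - \<mu> k = X * (1 + X * (r1 - r2))" by (simp add: algebra_simps power2_eq_square)
    then show ?thesis by simp
  qed
  have d2: "X^2 dvd \<mu> (Suc (Suc k)) - \<mu> (Suc k) - (\<mu> (Suc k) - \<mu> k)" for k
  proof -
    obtain r1 r2 r3 where "\<mu> (Suc (Suc k)) = 1 + of_nat (Suc (Suc k)) * X + X^2 * r1"
       "\<mu> (Suc k) = 1 + of_nat (Suc k) * X + X^2 * r2" "\<mu> k = 1 + of_nat k * X + X^2 * r3"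
      using rep unfolding X_def by blast
    then have "\<mu> (Suc (Suc k)) - \<mu> (Suc k) - (\<mu> (Suc k) - \<mu> k) = X^2 * (r1 - 2 * r2 + r3)"
      by (simp add: algebra_simps)
    then show ?thesis by simp
  qed
  define N where "N = Suc n"
  define P :: "'a poly mat" where "P = mat N N (\<lambda>(j,t). if j = t then 1 else if Suc j = t then -1 else 0)"
  define M where "M = mat N N (\<lambda>(i,j). \<mu> (i+j))"
  have M: "M \<in> carrier_mat N N" and P: "P \<in> carrier_mat N N" unfolding M_def P_def by auto
  have "upper_triangular P" by (rule upper_triangularI) (auto simp: P_def)
  then have "det P = prod_list (diag_mat P)" using det_upper_triangular P by blast
  also have "\<dots> = 1"
  proof -
    have "\<forall>x \<in> set (diag_mat P). x = 1" unfolding diag_mat_def P_def by auto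
    moreover have "\<And>xs::'a poly list. \<forall>x\<in>set xs. x = 1 \<Longrightarrow> prod_list xs = 1"
      subgoal for xs by (induction xs) auto done
    ultimately show ?thesis by blast
  qed
  finally have dP: "det P = 1" .
  define E where "E = transpose_mat P * (M * P)"
  have PT: "transpose_mat P \<in> carrier_mat N N" using P by auto
  have dE: "det E = det M"
    unfolding E_def using det_mult[OF PT mult_carrier_mat[OF M P]] det_mult[OF M P]
       det_transpose[OF P] dP by simp
  have MP: "(M * P) $$ (i, t) = M $$ (i, t) - (if 0 < t then M $$ (i, t - 1) else 0)" if "i < N" "t < N" for i t
  proof -
    have "(M * P) $$ (i, t) = (\<Sum>j = 0..<N. M $$ (i, j) * (if j = t then 1 else if Suc j = t then -1 else 0))"
      using that M P unfolding P_def by (simp add: scalar_prod_def)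
    also have "\<dots> = M $$ (i, t) - (if 0 < t then M $$ (i, t - 1) else 0)"
      by (rule sum_bidiag[OF that(2)])
    finally show ?thesis .
  qed
  have Ee: "E $$ (i, t) = (M * P) $$ (i, t) - (if 0 < i then (M * P) $$ (i - 1, t) else 0)" if "i < N" "t < N" for i t
  proof -
    have "E $$ (i, t) = (\<Sum>j = 0..<N. (M * P) $$ (j, t) * (if j = i then 1 else if Suc j = i then -1 else 0))"
      using that M P unfolding E_def P_def by (simp add: scalar_prod_def mult.commute)
    also have "\<dots> = (M * P) $$ (i, t) - (if 0 < i then (M * P) $$ (i - 1, t) else 0)"
      by (rule sum_bidiag[OF that(1)])
    finally show ?thesis .
  qed
  define a where "a = (\<lambda>i::nat. if 0 < i then 1 else (0::nat))"
  have "X ^ (sum a {0..<N} + sum a {0..<N}) dvd det E"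
  proof (rule det_pow_dvd[of _ N])
    show "E \<in> carrier_mat N N" unfolding E_def using M P by auto
  next
    fix i t assume it: "i < N" "t < N"
    have Mv: "M $$ (i', t') = \<mu> (i' + t')" if "i' < N" "t' < N" for i' t'
      using that unfolding M_def by simp
    show "X ^ (a i + a t) dvd E $$ (i, t)"
    proof (cases "i = 0")
      case True
      then show ?thesis
      proof (cases "t = 0")
        case False
        then obtain k where k: "t = Suc k" by (cases t) auto
        have "E $$ (i, t) = \<mu> (Suc k) - \<mu> k"
          using Ee[OF it] MP[OF it] it True k by (simp add: Mv)
        then show ?thesis using d1[of k] True k unfolding a_def by simp
      qed (simp add: a_def)
    next
      case False
      then obtain i' where i': "i = Suc i'" by (cases i) auto
      have it': "i' < N" using it i' by simp
      show ?thesis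
      proof (cases "t = 0")
        case True
        have "E $$ (i, t) = \<mu> (Suc i') - \<mu> i'"
          using Ee[OF it] MP[OF it] MP[OF it' it(2)] it it' True i' by (simp add: Mv)
        then show ?thesis using d1[of i'] True i' unfolding a_def by simp
      next
        case False
        then obtain k where k: "t = Suc k" by (cases t) auto
        have "E $$ (i, t) = \<mu> (Suc (Suc (i'+k))) - \<mu> (Suc (i'+k)) - (\<mu> (Suc (i'+k)) - \<mu> (i'+k))"
          using Ee[OF it] MP[OF it] MP[OF it' it(2)] it it' i' k by (simp add: Mv)
        then show ?thesis using d2[of "i'+k"] i' k unfolding a_def by (simp add: power2_eq_square)
      qed
    qed
  qed
  moreover have "sum a {0..<N} = n"
  proof -
    have "sum a {0..<N} = card ({0..<N} \<inter> {i. 0 < i})" unfolding a_def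
      by (simp add: sum.If_cases)
    also have "{0..<N} \<inter> {i. 0 < i} = {Suc 0..<N}" by auto
    finally show ?thesis unfolding N_def by simp
  qed
  ultimately have "X^(2*n) dvd det M" using dE by (simp add: mult_2)
  then show ?thesis unfolding M_def N_def X_def .
qed



lemma monom_taylor: "\<exists>\<tau>. monom (1::'a::comm_ring_1) j = 1 + of_nat j * [:-1,1:] + [:-1,1:]^2 * \<tau>"
proof (induction j)
  case 0 show ?case by (rule exI[of _ 0]) (simp add: one_pCons)
next
  case (Suc j)
  then obtain t where t: "monom (1::'a) j = 1 + of_nat j * [:-1,1:] + [:-1,1:]^2 * t" by blast
  have x: "[:0,1::'a:] = 1 + [:-1,1:]" by (simp add: one_pCons)
  have "monom (1::'a) (Suc j) = [:0,1:] * monom 1 j"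
    by (simp add: monom_Suc)
  also have "\<dots> = 1 + of_nat (Suc j) * [:-1,1:] + [:-1,1:]^2 * (of_nat j + [:0,1:] * t)"
  proof -
    have g: "(1+X)*(1 + of_nat j*X + X^2*t) = 1 + of_nat (Suc j)*X + X^2*(of_nat j + (1+X)*t)" for X :: "'a poly"
      by (simp add: algebra_simps power2_eq_square)
    show ?thesis unfolding t x by (rule g)
  qed
  finally show ?case by blast
qed

lemma sum_monom_taylor:
  fixes b :: "nat \<Rightarrow> 'a::comm_ring_1"
  assumes "finite A"
  shows "\<exists>\<rho>. (\<Sum>j\<in>A. monom (b j) j) = [:\<Sum>j\<in>A. b j:] + smult (\<Sum>j\<in>A. of_nat j * b j) [:-1,1:] + [:-1,1:]^2 * \<rho>"
  using assms
proof (induction A rule: finite_induct)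
  case empty show ?case by (rule exI[of _ 0]) simp
next
  case (insert x A)
  then obtain r where r: "(\<Sum>j\<in>A. monom (b j) j) = [:\<Sum>j\<in>A. b j:] + smult (\<Sum>j\<in>A. of_nat j * b j) [:-1,1:] + [:-1,1:]^2 * r"
    by blast
  obtain t where t: "monom (1::'a) x = 1 + of_nat x * [:-1,1:] + [:-1,1:]^2 * t"
    using monom_taylor by blast
  have m: "monom (b x) x = smult (b x) (monom 1 x)" by (simp add: smult_monom)
  have c: "[:a + c:] = [:a:] + [:c:]" for a c :: 'a by simp
  have "(\<Sum>j\<in>insert x A. monom (b j) j) = [:\<Sum>j\<in>insert x A. b j:] + smult (\<Sum>j\<in>insert x A. of_nat j * b j) [:-1,1:] + [:-1,1:]^2 * (smult (b x) t + r)"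
  proof -
    have g: "smult bx (1 + of_nat x * X + X^2*t) + ([:S:] + smult T X + X^2*r)
        = [:bx + S:] + smult (of_nat x * bx + T) X + X^2*(smult bx t + r)" for X :: "'a poly" and bx S T
    proof -
      have "of_nat x * X = smult (of_nat x) X" by (simp add: of_nat_poly)
      moreover have "[:bx + S:] = smult bx 1 + [:S:]" by simp
      ultimately show ?thesis by (simp add: algebra_simps smult_add_left smult_add_right)
    qed
    show ?thesis unfolding sum.insert[OF insert(1,2)] r m t
      by (simp only: g)
  qed
  then show ?case by blast
qed


context qctx
begin

definition Fp :: "nat \<Rightarrow> 'a poly" where
  "Fp k = smult (1 / qpoch q (q^2) ((k+1) div 2)) (\<Sum>j=0..k. monom ((-1)^j * qb k j) j)"

lemma poly_Fp: "poly (Fp k) s = F k s q"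
proof -
  have "(\<Sum>j=0..k. (-1)^j * qb k j * s^j) = (\<Sum>j=0..k. (- s)^j * qb k j)"
    by (intro sum.cong refl) (simp add: power_minus[of s])
  then show ?thesis unfolding Fp_def F_def poly_smult poly_sum poly_monom by simp
qed

lemma degree_Fp: "degree (Fp k) \<le> k"
proof -
  have "degree (\<Sum>j=0..k. monom ((-1)^j * qb k j) j) \<le> k"
  proof (rule degree_sum_le)
    fix j assume "j \<in> {0..k}"
    then show "degree (monom ((-1)^j * qb k j) j) \<le> k"
      using degree_monom_le[of "(-1)^j * qb k j" j] by simp
  qed simp
  then show ?thesis unfolding Fp_def by (rule le_trans[OF degree_smult_le])
qed

lemma Fp_even_rep: "\<exists>\<rho>. Fp (2*m) = 1 + of_nat m * [:-1,1:] + [:-1,1:]^2 * \<rho>"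
proof -
  define b where "b = (\<lambda>j. (-1::'a)^j * qb (2*m) j)"
  define c where "c = 1 / qpoch q (q^2) ((2*m+1) div 2)"
  obtain r where r: "(\<Sum>j=0..2*m. monom (b j) j) = [:\<Sum>j=0..2*m. b j:] + smult (\<Sum>j=0..2*m. of_nat j * b j) [:-1,1:] + [:-1,1:]^2 * r"
    using sum_monom_taylor[of "{0..2*m}" b] by auto
  have Fe: "Fp (2*m) = smult c (\<Sum>j=0..2*m. monom (b j) j)" unfolding Fp_def b_def c_def ..
  have S: "c * (\<Sum>j=0..2*m. b j) = 1"
  proof -
    have "poly (Fp (2*m)) 1 = c * (\<Sum>j=0..2*m. b j)" unfolding Fe poly_smult poly_sum poly_monom by simp
    then show ?thesis using F_one[of m] unfolding poly_Fp by simp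
  qed
  have bs: "b (2*m - j) = b j" if "j \<le> 2*m" for j
  proof -
    have "even (2*m - j) = even j" using that by auto
    then have "(-1::'a)^(2*m-j) = (-1)^j" by (cases "even j") (auto simp: neg_one_even_power neg_one_odd_power)
    then show ?thesis unfolding b_def using qb_sym[OF that] by simp
  qed
  have T: "(\<Sum>j=0..2*m. of_nat j * b j) = of_nat m * (\<Sum>j=0..2*m. b j)"
  proof -
    have "(\<Sum>j=0..2*m. of_nat j * b j) = (\<Sum>j=0..2*m. of_nat (2*m - j) * b (2*m - j))"
      by (rule sum.reindex_bij_witness[where i="\<lambda>j. 2*m - j" and j="\<lambda>j. 2*m - j"]) auto
    also have "\<dots> = (\<Sum>j=0..2*m. (2 * of_nat m - of_nat j) * b j)"
      by (intro sum.cong refl) (auto simp: bs of_nat_diff)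
    finally have "2 * (\<Sum>j=0..2*m. of_nat j * b j) = (\<Sum>j=0..2*m. of_nat j * b j) + (\<Sum>j=0..2*m. (2 * of_nat m - of_nat j) * b j)"
      by simp
    also have "\<dots> = 2 * (of_nat m * (\<Sum>j=0..2*m. b j))"
      by (simp add: sum.distrib[symmetric] sum_distrib_left algebra_simps)
    finally show ?thesis by simp
  qed
  have "Fp (2*m) = smult c [:\<Sum>j=0..2*m. b j:] + smult (c * (\<Sum>j=0..2*m. of_nat j * b j)) [:-1,1:] + [:-1,1:]^2 * smult c r"
    unfolding Fe r by (simp add: smult_add_right right_diff_distrib)
  also have "smult c [:\<Sum>j=0..2*m. b j:] = 1" using S by simp
  also have "c * (\<Sum>j=0..2*m. of_nat j * b j) = of_nat m" unfolding T using S by (simp add: mult_ac)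
  also have "smult (of_nat m) [:-1,1::'a:] = of_nat m * [:-1,1:]" by (simp add: of_nat_poly)
  finally show ?thesis by blast
qed

end



lemma eval_det: "poly (det A) s = det (map_mat (\<lambda>p. poly p s) A)"
  unfolding det_def by (simp add: poly_sum poly_prod of_int_poly)

lemma lin_pow_cancel:
  fixes a b :: "'a::field"
  assumes ab: "a \<noteq> b" and d: "[:-a,1:]^k dvd [:-b,1:]^j * Q"
  shows "[:-a,1:]^k dvd Q"
proof (cases "Q = 0")
  case False
  have nz: "[:-b,1:]^j * Q \<noteq> 0" using False by simp
  have "k \<le> order a ([:-b,1:]^j * Q)" using d nz by (simp add: order_divides)
  also have "order a ([:-b,1:]^j * Q) = order a ([:-b,1:]^j) + order a Q"
    using nz by (rule order_mult)
  also have "order a ([:-b,1:]^j) = 0" using ab by (intro order_0I) simp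
  finally show ?thesis by (simp add: order_divides)
qed simp

lemma prod_lin_dvd:
  fixes P :: "'a::field poly" and \<rho> :: "'b \<Rightarrow> 'a"
  assumes "finite I" "inj_on \<rho> I" "\<And>i. i \<in> I \<Longrightarrow> [:-\<rho> i,1:]^(m i) dvd P"
  shows "(\<Prod>i\<in>I. [:-\<rho> i,1:]^(m i)) dvd P"
  using assms
proof (induction I arbitrary: P rule: finite_induct)
  case empty then show ?case by simp
next
  case (insert x I)
  obtain P' where P': "P = [:-\<rho> x,1:]^(m x) * P'" using insert(5)[of x] by auto
  have "(\<Prod>i\<in>I. [:-\<rho> i,1:]^(m i)) dvd P'"
  proof (rule insert(3))
    show "inj_on \<rho> I" using insert(4) by (simp add: inj_on_insert)
  next
    fix i assume i: "i \<in> I"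
    then have "\<rho> i \<noteq> \<rho> x" using insert(2,4) by (metis insertCI inj_on_contraD)
    moreover have "[:-\<rho> i,1:]^(m i) dvd [:-\<rho> x,1:]^(m x) * P'" using insert(5)[of i] i P' by simp
    ultimately show "[:-\<rho> i,1:]^(m i) dvd P'" by (rule lin_pow_cancel)
  qed
  then show ?case unfolding prod.insert[OF insert(1,2)] P' by (rule mult_dvd_mono[OF dvd_refl])
qed

lemma prod_int_sym: fixes f :: "int \<Rightarrow> 'a::comm_monoid_mult" shows
  "(\<Prod>e\<in>{-int K..int K}. f e) = f 0 * (\<Prod>k\<in>{1..K}. f (int k)) * (\<Prod>k\<in>{1..K}. f (- int k))"
proof (induction K)
  case 0 then show ?case by simp
next
  case (Suc K)
  have s: "{-int (Suc K)..int (Suc K)} = insert (int (Suc K)) (insert (- int (Suc K)) {-int K..int K})" by auto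
  show ?case unfolding s using Suc by (simp add: prod.cl_ivl_Suc mult_ac)
qed

lemma prod_pairs_0: fixes g :: "nat \<Rightarrow> 'a::comm_monoid_mult" shows "(\<Prod>k\<in>{0..2*N+1}. g k) = (\<Prod>j\<in>{0..N}. g (2*j) * g (2*j+1))"
proof (induction N)
  case 0 then show ?case by (simp add: numeral_2_eq_2)
next
  case (Suc N)
  have e: "2 * Suc N + 1 = Suc (Suc (2*N+1))" by simp
  show ?case unfolding e prod.cl_ivl_Suc using Suc by (simp add: mult_ac)
qed

lemma prod_pairs_1: fixes g :: "nat \<Rightarrow> 'a::comm_monoid_mult" shows "(\<Prod>k\<in>{1..2*N+2}. g k) = (\<Prod>j\<in>{0..N}. g (2*j+1) * g (2*j+2))"
proof (induction N)
  case 0 then show ?case by (simp add: numeral_2_eq_2 prod.cl_ivl_Suc)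
next
  case (Suc N)
  have e: "2 * Suc N + 2 = Suc (Suc (2*N+2))" by simp
  show ?case unfolding e prod.cl_ivl_Suc using Suc by (simp add: mult_ac)
qed

lemma poly_const_factor:
  fixes P Pr :: "'a::field poly"
  assumes "Pr dvd P" "Pr \<noteq> 0" "degree P \<le> degree Pr" "poly Pr 0 = 1"
  shows "poly P s = poly P 0 * poly Pr s"
proof -
  obtain K where K: "P = Pr * K" using assms(1) by blast
  show ?thesis
  proof (cases "K = 0")
    case True then show ?thesis using K by simp
  next
    case False
    then have "degree P = degree Pr + degree K" using K assms(2) by (simp add: degree_mult_eq)
    then have "degree K = 0" using assms(3) by simp
    then obtain k where "K = [:k:]" using degree0_coeffs by blast
    then show ?thesis using K assms(4) by simp
  qed
qed



context qctx
begin

definition rho :: "int \<Rightarrow> 'a" where "rho e = q powi e"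

lemma rho_pos: "rho (int k) = q^k" by (simp add: rho_def)
lemma rho_neg: "rho (- int k) = 1/q^k" by (simp add: rho_def power_int_minus inverse_eq_divide)

lemma rho_0: "rho 0 = 1" by (simp add: rho_def)

lemma rho_inj: "inj_on rho A"
proof (rule inj_onI)
  fix a b assume "a \<in> A" "b \<in> A" and h: "rho a = rho b"
  have "q powi (a - b) = 1" using h q0 unfolding rho_def
    by (simp add: power_int_diff power_int_eq_0_iff)
  show "a = b"
  proof (cases "a - b \<ge> 0")
    case True
    then have "q powi (a - b) = q ^ nat (a - b)" by (metis power_int_of_nat int_nat_eq)
    then have "q ^ nat (a - b) = 1" using \<open>q powi (a - b) = 1\<close> by simp
    then have "nat (a - b) = 0" using qk[of "nat (a-b)"] by (cases "nat (a-b) = 0") auto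
    then show ?thesis using True by simp
  next
    case False
    then have "q powi (a - b) = inverse (q ^ nat (b - a))"
      by (metis minus_diff_eq power_int_minus power_int_of_nat int_nat_eq linorder_not_le less_imp_le neg_0_le_iff_le)
    then have "q ^ nat (b - a) = 1" using \<open>q powi (a - b) = 1\<close> by (simp add: inverse_eq_iff_eq)
    then have "nat (b - a) = 0" using qk[of "nat (b-a)"] by (cases "nat (b-a) = 0") auto
    then show ?thesis using False by simp
  qed
qed

definition M0 :: "nat \<Rightarrow> 'a poly mat" where "M0 n = mat (Suc n) (Suc n) (\<lambda>(i,j). Fp (2*(i+j)))"

lemma D0_eval: "D0 n s q = poly (det (M0 n)) s"
  unfolding eval_det D0_def
  by (rule arg_cong[where f=det], rule eq_matI) (auto simp: M0_def poly_Fp algebra_simps)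

definition m0 :: "nat \<Rightarrow> int \<Rightarrow> nat" where "m0 n e = (if e = 0 then 2*n else n - nat \<bar>e\<bar> div 2)"

lemma M0_alt: "M0 n = mat (Suc n) (Suc n) (\<lambda>(i,j). (\<lambda>k. Fp (2*k)) (i+j))"
  unfolding M0_def by simp

lemma P0_dvd: "[:-rho e,1:]^(m0 n e) dvd det (M0 n)"
proof (cases "e = 0")
  case True
  have "[:-1,1:]^(2*n) dvd det (M0 n)" unfolding M0_alt
    by (rule hankel_one_dvd) (rule Fp_even_rep)
  then show ?thesis using True by (simp add: m0_def rho_def)
next
  case False
  define k where "k = nat \<bar>e\<bar>"
  have k: "k > 0" "e = int k \<or> e = - int k" using False unfolding k_def by arith+
  have m: "m0 n e = n - k div 2" using k False by (auto simp: m0_def)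
  obtain G where G: "\<And>M. F (2*M) (q^k) q = poly G ((q^2)^M)" "degree G \<le> k div 2"
    using G_exists[of k] by blast
  from k(2) show ?thesis
  proof
    assume e: "e = int k"
    have "[:-(q^k),1:]^(n - k div 2) dvd det (M0 n)" unfolding M0_alt
      by (rule hankel_root_dvd[where u=1 and G=G and y="q^2"]) (simp_all add: poly_Fp G)
    then show ?thesis unfolding m unfolding e rho_pos .
  next
    assume e: "e = - int k"
    have qk0: "q^k \<noteq> 0" using q0 by simp
    have "[:-(1/q^k),1:]^(n - k div 2) dvd det (M0 n)" unfolding M0_alt
      by (rule hankel_root_dvd[where u="(1/q^k)^2" and G=G and y="q^2"])
         (simp_all add: poly_Fp G F_inv(1)[OF qk0])
    then show ?thesis unfolding m unfolding e rho_neg .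
  qed
qed

definition Pr0 :: "nat \<Rightarrow> 'a poly" where
  "Pr0 n = (\<Prod>j=0..n. ([:-(q^(2*j)),1:] * [:-(q^(2*j+1)),1:] * [:-(1/q^(2*j)),1:] * [:-(1/q^(2*j+1)),1:])^(n-j))"

lemma Pr0_eq: "Pr0 n = (\<Prod>e\<in>{-int (2*n+1)..int (2*n+1)}. [:-rho e,1:]^(m0 n e))"
proof -
  define gp where "gp = (\<lambda>k. [:-(q^k),1:]^(n - k div 2))"
  define gm where "gm = (\<lambda>k. [:-(1/q^k),1:]^(n - k div 2))"
  have "(\<Prod>e\<in>{-int (2*n+1)..int (2*n+1)}. [:-rho e,1:]^(m0 n e))
     = [:-1,1:]^(2*n) * (\<Prod>k\<in>{1..2*n+1}. gp k) * (\<Prod>k\<in>{1..2*n+1}. gm k)"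
    unfolding prod_int_sym
    by (simp add: m0_def rho_pos rho_neg gp_def gm_def rho_0)
  also have "[:-1,1:]^(2*n) = gp 0 * gm 0" by (simp add: gp_def gm_def mult_2 power_add)
  also have "gp 0 * gm 0 * (\<Prod>k\<in>{1..2*n+1}. gp k) * (\<Prod>k\<in>{1..2*n+1}. gm k)
      = (\<Prod>k\<in>{0..2*n+1}. gp k) * (\<Prod>k\<in>{0..2*n+1}. gm k)"
    by (simp add: prod.atLeast_Suc_atMost[of 0] mult_ac)
  also have "\<dots> = (\<Prod>j\<in>{0..n}. gp (2*j) * gp (2*j+1)) * (\<Prod>j\<in>{0..n}. gm (2*j) * gm (2*j+1))"
    unfolding prod_pairs_0 ..
  also have "\<dots> = Pr0 n"
  proof -
    have d: "\<And>j::nat. 2*j div 2 = j" "\<And>j::nat. (2*j+1) div 2 = j" by simp_all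
    show ?thesis unfolding Pr0_def prod.distrib[symmetric]
      by (intro prod.cong refl) (simp only: gp_def gm_def power_mult_distrib d, simp only: mult_ac)
  qed
  finally show ?thesis ..
qed

lemma Pr0_dvd: "Pr0 n dvd det (M0 n)"
  unfolding Pr0_eq by (rule prod_lin_dvd) (auto intro: rho_inj P0_dvd)

lemma sum_rev_nat: "(\<Sum>j=0..n. (n - j)) = (\<Sum>i\<in>{0..<Suc n}. (i::nat))"
  by (rule sum.reindex_bij_witness[where i="\<lambda>j. n - j" and j="\<lambda>j. n - j"]) auto

lemma lin_nz: "[:-x,1:] \<noteq> (0::'a poly)" by simp

lemma Pr0_nz: "Pr0 n \<noteq> 0"
  unfolding Pr0_def by (auto simp: prod_zero_iff)

lemma deg4: "degree (([:-a,1:]*[:-b,1:]*[:-c,1:]*[:-d,1:])^k :: 'a poly) = 4*k"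
  by (simp add: degree_power_eq degree_mult_eq)

lemma degree_Pr0: "degree (Pr0 n) = 4 * (\<Sum>j=0..n. (n - j))"
  unfolding Pr0_def
  by (subst degree_prod_eq_sum_degree) (simp_all only: deg4 sum_distrib_left, auto)

lemma degree_M0: "degree (det (M0 n)) \<le> 4 * (\<Sum>j=0..n. (n - j))"
proof -
  have "degree (det (M0 n)) \<le> (\<Sum>i\<in>{0..<Suc n}. 2*i) + (\<Sum>i\<in>{0..<Suc n}. 2*i)"
    by (rule degree_det_le[of _ "Suc n"]) (auto simp: M0_def intro: le_trans[OF degree_Fp])
  also have "\<dots> = 4 * (\<Sum>i\<in>{0..<Suc n}. i)"
    by (simp only: sum_distrib_left[symmetric])
  also have "\<dots> = 4 * (\<Sum>j=0..n. (n - j))" unfolding sum_rev_nat ..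
  finally show ?thesis .
qed

lemma poly_Pr0_0: "poly (Pr0 n) 0 = 1"
  unfolding Pr0_def poly_prod poly_power using q0
  by (intro prod.neutral ballI) (simp add: field_simps)

lemma D0_main: "D0 n s q = D0 n 0 q * poly (Pr0 n) s"
  unfolding D0_eval
  by (rule poly_const_factor[OF Pr0_dvd Pr0_nz]) (simp_all add: degree_Pr0 degree_M0 poly_Pr0_0)

end


context qctx
begin

definition M1 :: "nat \<Rightarrow> 'a poly mat" where "M1 n = mat (Suc n) (Suc n) (\<lambda>(i,j). Fp (2*(i+j)+1))"

lemma D1_eval: "D1 n s q = poly (det (M1 n)) s"
  unfolding eval_det D1_def
  by (rule arg_cong[where f=det], rule eq_matI) (auto simp: M1_def poly_Fp algebra_simps)

definition m1 :: "nat \<Rightarrow> int \<Rightarrow> nat" where "m1 n e = (if e = 0 then n+1 else n - (nat \<bar>e\<bar> - 1) div 2)"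

lemma M1_alt: "M1 n = mat (Suc n) (Suc n) (\<lambda>(i,j). (\<lambda>k. Fp (2*k+1)) (i+j))"
  unfolding M1_def by simp

lemma P1_dvd: "[:-rho e,1:]^(m1 n e) dvd det (M1 n)"
proof (cases "e = 0")
  case True
  have "[:-1,1:]^(sum (\<lambda>_. 1) {0..<Suc n} + sum (\<lambda>_. 0) {0..<Suc n}) dvd det (M1 n)"
  proof (rule det_pow_dvd[of _ "Suc n"])
    show "M1 n \<in> carrier_mat (Suc n) (Suc n)" by (simp add: M1_def)
  next
    fix i j assume ij: "i < Suc n" "j < Suc n"
    have "poly (M1 n $$ (i,j)) 1 = 0" using ij F_one[of "i+j"] by (simp add: M1_def poly_Fp)
    then show "[:-1,1:] ^ (1 + 0) dvd M1 n $$ (i, j)" by (simp add: poly_eq_0_iff_dvd)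
  qed
  then show ?thesis using True by (simp add: m1_def rho_0)
next
  case False
  define k where "k = nat \<bar>e\<bar>"
  have k: "k > 0" "e = int k \<or> e = - int k" using False unfolding k_def by arith+
  have m: "m1 n e = n - (k - 1) div 2" using k False by (auto simp: m1_def)
  obtain G' where G: "\<And>M. F (2*M+1) (q^k) q = poly G' ((q^2)^M)" "degree G' \<le> (k - 1) div 2"
    using G_exists[of k] by blast
  from k(2) show ?thesis
  proof
    assume e: "e = int k"
    have "[:-(q^k),1:]^(n - (k - 1) div 2) dvd det (M1 n)" unfolding M1_alt
      by (rule hankel_root_dvd[where u=1 and G=G' and y="q^2"]) (simp_all add: poly_Fp G[simplified])
    then show ?thesis unfolding m unfolding e rho_pos .
  next
    assume e: "e = - int k"
    have qk0: "q^k \<noteq> 0" using q0 by simp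
    have "[:-(1/q^k),1:]^(n - (k - 1) div 2) dvd det (M1 n)" unfolding M1_alt
    proof (rule hankel_root_dvd[where u="(1/q^k)^2" and G="smult (-(1/q^k)) G'" and y="q^2"])
      fix k' show "poly (Fp (2*k'+1)) (1/q^k) = ((1/q^k)^2)^k' * poly (smult (-(1/q^k)) G') ((q^2)^k')"
      proof -
        have "poly (Fp (2*k'+1)) (1/q^k) = -(1/q^k) * ((1/q^k)^2)^k' * F (2*k'+1) (q^k) q"
          unfolding poly_Fp by (rule F_inv(2)[OF qk0])
        also have "\<dots> = ((1/q^k)^2)^k' * poly (smult (-(1/q^k)) G') ((q^2)^k')"
          unfolding G(1) poly_smult by (simp only: mult_ac)
        finally show ?thesis .
      qed
    next
      show "degree (smult (-(1/q^k)) G') \<le> (k - 1) div 2" by (rule le_trans[OF degree_smult_le G(2)])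
    qed
    then show ?thesis unfolding m unfolding e rho_neg .
  qed
qed

definition Q1 :: "nat \<Rightarrow> 'a poly" where
  "Q1 n = (\<Prod>j=0..n. ([:-(q^(2*j+2)),1:] * [:-(q^(2*j+1)),1:] * [:-(1/q^(2*j+2)),1:] * [:-(1/q^(2*j+1)),1:])^(n-j))"

definition Pr1 :: "nat \<Rightarrow> 'a poly" where "Pr1 n = [:1,-1:]^(n+1) * Q1 n"

lemma Q1_eq: "[:-1,1:]^(n+1) * Q1 n = (\<Prod>e\<in>{-int (2*n+2)..int (2*n+2)}. [:-rho e,1:]^(m1 n e))"
proof -
  define gp where "gp = (\<lambda>k. [:-(q^k),1:]^(n - (k - 1) div 2))"
  define gm where "gm = (\<lambda>k. [:-(1/q^k),1:]^(n - (k - 1) div 2))"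
  have "(\<Prod>e\<in>{-int (2*n+2)..int (2*n+2)}. [:-rho e,1:]^(m1 n e))
     = [:-1,1:]^(n+1) * (\<Prod>k\<in>{1..2*n+2}. gp k) * (\<Prod>k\<in>{1..2*n+2}. gm k)"
    unfolding prod_int_sym
    by (simp add: m1_def rho_pos rho_neg gp_def gm_def rho_0)
  also have "\<dots> = [:-1,1:]^(n+1) * ((\<Prod>j\<in>{0..n}. gp (2*j+1) * gp (2*j+2)) * (\<Prod>j\<in>{0..n}. gm (2*j+1) * gm (2*j+2)))"
    unfolding prod_pairs_1 by (simp add: mult_ac)
  also have "(\<Prod>j\<in>{0..n}. gp (2*j+1) * gp (2*j+2)) * (\<Prod>j\<in>{0..n}. gm (2*j+1) * gm (2*j+2)) = Q1 n"
  proof -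
    have d: "\<And>j::nat. (2*j+1-1) div 2 = j" "\<And>j::nat. (2*j+2-1) div 2 = j" by simp_all
    show ?thesis unfolding Q1_def prod.distrib[symmetric]
      by (intro prod.cong refl) (simp only: gp_def gm_def power_mult_distrib d, simp only: mult_ac)
  qed
  finally show ?thesis ..
qed

lemma Pr1_dvd: "Pr1 n dvd det (M1 n)"
proof -
  have "[:-1,1:]^(n+1) * Q1 n dvd det (M1 n)"
    unfolding Q1_eq by (rule prod_lin_dvd) (auto intro: rho_inj P1_dvd)
  moreover have "[:-1,1:]^(n+1) * Q1 n = (-1)^(n+1) * Pr1 n"
  proof -
    have "[:-1,1::'a:] = - [:1,-1:]" by simp
    then have "[:-1,1::'a:]^(n+1) = (-1)^(n+1) * [:1,-1:]^(n+1)" by (simp only: power_minus[of "[:1,-1::'a:]"])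
    then show ?thesis unfolding Pr1_def by (simp only: mult.assoc)
  qed
  ultimately have "(-1)^(n+1) * Pr1 n dvd det (M1 n)" by simp
  then show ?thesis by (rule dvd_mult_right)
qed

lemma Q1_nz: "Q1 n \<noteq> 0"
  unfolding Q1_def by (auto simp: prod_zero_iff)

lemma lin1_nz: "[:1,-1::'a:]^(n+1) \<noteq> 0" by (rule power_not_zero) simp

lemma Pr1_nz: "Pr1 n \<noteq> 0"
  unfolding Pr1_def using Q1_nz lin1_nz by (simp only: mult_eq_0_iff) blast

lemma degree_Pr1: "degree (Pr1 n) = (n+1) + 4 * (\<Sum>j=0..n. (n - j))"
proof -
  have "degree (Q1 n) = 4 * (\<Sum>j=0..n. (n - j))"
    unfolding Q1_def
    by (subst degree_prod_eq_sum_degree) (simp_all only: deg4 sum_distrib_left, auto)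
  moreover have "degree ([:1,-1::'a:]^(n+1)) = n+1"
    by (subst degree_power_eq) simp_all
  ultimately show ?thesis unfolding Pr1_def degree_mult_eq[OF lin1_nz Q1_nz] by simp
qed

lemma degree_M1: "degree (det (M1 n)) \<le> (n+1) + 4 * (\<Sum>j=0..n. (n - j))"
proof -
  have "degree (det (M1 n)) \<le> (\<Sum>i\<in>{0..<Suc n}. 2*i+1) + (\<Sum>i\<in>{0..<Suc n}. 2*i)"
    by (rule degree_det_le[of _ "Suc n"]) (auto simp: M1_def intro: le_trans[OF degree_Fp])
  also have "\<dots> = (n+1) + 4 * (\<Sum>i\<in>{0..<Suc n}. i)"
  proof -
    have s1: "(\<Sum>i\<in>{0..<Suc n}. 2*i+1) = (\<Sum>i\<in>{0..<Suc n}. 2*i) + (\<Sum>i\<in>{0..<Suc n}. 1)" by (rule sum.distrib)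
    have s2: "(\<Sum>i\<in>{0..<Suc n}. 2*i) = 2 * (\<Sum>i\<in>{0..<Suc n}. i)" by (rule sum_distrib_left[symmetric])
    have s3: "(\<Sum>i\<in>{0..<Suc n}. (1::nat)) = n+1" by simp
    show ?thesis unfolding s1 s2 s3 by simp
  qed
  also have "\<dots> = (n+1) + 4 * (\<Sum>j=0..n. (n - j))" unfolding sum_rev_nat ..
  finally show ?thesis .
qed

lemma poly_Q1_0: "poly (Q1 n) 0 = 1"
  unfolding Q1_def poly_prod poly_power using q0
  by (intro prod.neutral ballI) (simp add: field_simps)

lemma poly_Pr1_0: "poly (Pr1 n) 0 = 1"
  unfolding Pr1_def poly_mult poly_Q1_0 poly_power by simp

lemma D1_main: "D1 n s q = D1 n 0 q * poly (Pr1 n) s"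
  unfolding D1_eval
proof (rule poly_const_factor[OF Pr1_dvd Pr1_nz])
  show "degree (det (M1 n)) \<le> degree (Pr1 n)" using degree_M1[of n] unfolding degree_Pr1 .
  show "poly (Pr1 n) 0 = 1" by (rule poly_Pr1_0)
qed

end

theorem theorem3p2:
  fixes q s :: "'a::field_char_0"
  assumes "q \<noteq> 0"
    and "\<And>k::nat. k > 0 \<Longrightarrow> q ^ k \<noteq> 1"
  shows "D0 n s q = D0 n 0 q * (\<Prod>j=0..n. ((s - q ^ (2*j)) * (s - q ^ (2*j+1))
            * (s - 1 / q ^ (2*j)) * (s - 1 / q ^ (2*j+1))) ^ (n - j))
    \<and> D1 n s q = D1 n 0 q * (1 - s) ^ (n + 1) * (\<Prod>j=0..n. ((s - q ^ (2*j+2)) * (s - q ^ (2*j+1))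
            * (s - 1 / q ^ (2*j+2)) * (s - 1 / q ^ (2*j+1))) ^ (n - j))"
  proof -
  interpret qctx q using assms by unfold_locales
  have p0: "poly (Pr0 n) s = (\<Prod>j=0..n. ((s - q ^ (2*j)) * (s - q ^ (2*j+1))
            * (s - 1 / q ^ (2*j)) * (s - 1 / q ^ (2*j+1))) ^ (n - j))"
    unfolding Pr0_def poly_prod poly_power poly_mult by simp
  have p1: "poly (Pr1 n) s = (1 - s) ^ (n + 1) * (\<Prod>j=0..n. ((s - q ^ (2*j+2)) * (s - q ^ (2*j+1))
            * (s - 1 / q ^ (2*j+2)) * (s - 1 / q ^ (2*j+1))) ^ (n - j))"
    unfolding Pr1_def Q1_def poly_prod poly_power poly_mult by simp
  show ?thesis using D0_main[of n s] D1_main[of n s] unfolding p0 p1 by (simp add: mult.assoc)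
qed

end
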